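(* Let $\Omega\subset\mathbb{R}^d$ be a connected, bounded open domain, let $\mu$ be a bounded measurable weight on $\Omega$ with $\mu>0$ almost everywhere, let $\mathbf{r}\in\Upsilon$, and assume the hyperplanes $\mathcal{P}_1(\mathbf{r}_1),\ldots,\mathcal{P}_n(\mathbf{r}_n)$ are pairwise distinct. Then the layer Gauss–Newton matrix $\mathcal{H}(\mathbf{r})$ is symmetric positive definite. Consequently, for $\mathbf{c}=(c_1,\ldots,c_n)^T\in\mathbb{R}^n$, the Gauss–Newton matrix $\mathcal{G}(\mathbf{c},\mathbf{r})=(D(\mathbf{c})\otimes I_{d+1})\mathcal{H}(\mathbf{r})(D(\mathbf{c})\otimes I_{d+1})$ is positive definite if and only if $c_i\neq0$ for all $i=1,\ldots,n$.
   Context: $\mathcal{S}^{d-1}$ is the unit sphere in $\mathbb{R}^d$; $\mathbf{y}=(1,x_1,\ldots,x_d)^T$. For $\mathbf{r}_i=(b_i,\boldsymbol{\omega}_i)\in\mathbb{R}^{d+1}$, $\mathcal{P}_i(\mathbf{r}_i)=\{\mathbf{x}\in\Omega:\boldsymbol{\omega}_i\cdot\mathbf{x}+b_i=0\}$; $\Upsilon=\{\mathbf{r}=(\mathbf{r}_1,\ldots,\mathbf{r}_n): \mathbf{r}_i=(b_i,\boldsymbol{\omega}_i),\ b_i\in\mathbb{R},\ \boldsymbol{\omega}_i\in\mathcal{S}^{d-1},\ \mathcal{P}_i(\mathbf{r}_i)\cap\Omega\neq\emptyset\}$. $H$ is the Heaviside function, $\mathbf{H}(\mathbf{x})=(H(\mathbf{r}_1\cdot\mathbf{y}),\ldots,H(\mathbf{r}_n\cdot\mathbf{y}))^T$.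 The layer Gauss–Newton matrix is the $n(d+1)\times n(d+1)$ matrix $\mathcal{H}(\mathbf{r})=\int_\Omega\mu(\mathbf{x})[\mathbf{H}(\mathbf{x})\mathbf{H}(\mathbf{x})^T]\otimes[\mathbf{y}\mathbf{y}^T]\,d\mathbf{x}$, where $\otimes$ is the Kronecker product. $D(\mathbf{c})=\mathrm{diag}(c_1,\ldots,c_n)$ and $I_{d+1}$ is the identity matrix of order $d+1$. *)

theory Defs
  imports "HOL-Analysis.Analysis"
begin

text \<open>A neuron parameter r_i = (b_i, omega_i) is a pair in real x real^'d.
  Matrices of order n(d+1) are indexed by pairs (i, a) with i < n and
  a :: 'd option, where None stands for the constant coordinate 1 of
  y = (1, x_1, ..., x_d) and Some j for the coordinate x_j.\<close>

definition heaviside :: "real \<Rightarrow> real" where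
  "heaviside t = (if t > 0 then 1 else 0)"

definition aug :: "real^'d \<Rightarrow> 'd option \<Rightarrow> real" where
  "aug x a = (case a of None \<Rightarrow> 1 | Some j \<Rightarrow> x $ j)"

text \<open>r . y  with r = (b, omega) and y = (1, x)\<close>
definition act :: "real \<times> (real^'d) \<Rightarrow> real^'d \<Rightarrow> real" where
  "act r x = fst r + snd r \<bullet> x"

definition hyperplane :: "(real^'d) set \<Rightarrow> real \<times> (real^'d) \<Rightarrow> (real^'d) set" where
  "hyperplane \<Omega> r = {x \<in> \<Omega>. snd r \<bullet> x + fst r = 0}"

definition Upsilon :: "(real^'d) set \<Rightarrow> nat \<Rightarrow> (nat \<Rightarrow> real \<times> (real^'d)) set" where
  "Upsilon \<Omega> n = {r. \<forall>i<n. norm (snd (r i)) = 1 \<and> hyperplane \<Omega> (r i) \<noteq> {}}"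

definition idx :: "nat \<Rightarrow> (nat \<times> 'd option) set" where
  "idx n = {..<n} \<times> UNIV"

definition kron :: "(nat \<Rightarrow> nat \<Rightarrow> real) \<Rightarrow> ('d option \<Rightarrow> 'd option \<Rightarrow> real)
    \<Rightarrow> nat \<times> 'd option \<Rightarrow> nat \<times> 'd option \<Rightarrow> real" where
  "kron A B k l = A (fst k) (fst l) * B (snd k) (snd l)"

definition mat_mult :: "(nat \<times> 'd option) set \<Rightarrow> (nat \<times> 'd option \<Rightarrow> nat \<times> 'd option \<Rightarrow> real)
    \<Rightarrow> (nat \<times> 'd option \<Rightarrow> nat \<times> 'd option \<Rightarrow> real)
    \<Rightarrow> nat \<times> 'd option \<Rightarrow> nat \<times> 'd option \<Rightarrow> real" where
  "mat_mult I A B k l = (\<Sum>m\<in>I. A k m * B m l)"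

definition diag_mat :: "(nat \<Rightarrow> real) \<Rightarrow> nat \<Rightarrow> nat \<Rightarrow> real" where
  "diag_mat c i j = (if i = j then c i else 0)"

definition id_mat :: "'d option \<Rightarrow> 'd option \<Rightarrow> real" where
  "id_mat a b = (if a = b then 1 else 0)"

definition layer_GN :: "(real^'d) set \<Rightarrow> (real^'d \<Rightarrow> real) \<Rightarrow> nat \<Rightarrow> (nat \<Rightarrow> real \<times> (real^'d))
    \<Rightarrow> nat \<times> 'd option \<Rightarrow> nat \<times> 'd option \<Rightarrow> real" where
  "layer_GN \<Omega> \<mu> n r k l =
     (LINT x:\<Omega>|lebesgue. \<mu> x *
        kron (\<lambda>i j. heaviside (act (r i) x) * heaviside (act (r j) x))
             (\<lambda>a b. aug x a * aug x b) k l)"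

definition GN :: "(real^'d) set \<Rightarrow> (real^'d \<Rightarrow> real) \<Rightarrow> nat \<Rightarrow> (nat \<Rightarrow> real)
    \<Rightarrow> (nat \<Rightarrow> real \<times> (real^'d)) \<Rightarrow> nat \<times> 'd option \<Rightarrow> nat \<times> 'd option \<Rightarrow> real" where
  "GN \<Omega> \<mu> n c r =
     mat_mult (idx n) (mat_mult (idx n) (kron (diag_mat c) id_mat) (layer_GN \<Omega> \<mu> n r))
              (kron (diag_mat c) id_mat)"

definition symmetric_on :: "'i set \<Rightarrow> ('i \<Rightarrow> 'i \<Rightarrow> real) \<Rightarrow> bool" where
  "symmetric_on I M \<longleftrightarrow> (\<forall>k\<in>I. \<forall>l\<in>I. M k l = M l k)"

definition pos_def_on :: "'i set \<Rightarrow> ('i \<Rightarrow> 'i \<Rightarrow> real) \<Rightarrow> bool" where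
  "pos_def_on I M \<longleftrightarrow>
     (\<forall>v. (\<exists>k\<in>I. v k \<noteq> 0) \<longrightarrow> (\<Sum>k\<in>I. \<Sum>l\<in>I. v k * M k l * v l) > 0)"

end

theory Submission
  imports Defs
begin


lemma cont_meas:
  fixes f :: "real^'d \<Rightarrow> real"
  assumes "continuous_on UNIV f" shows "f \<in> borel_measurable lebesgue"
proof -
  have "f \<in> borel_measurable lborel" using borel_measurable_continuous_onI[OF assms] by simp
  thus ?thesis by (rule measurable_completion)
qed

lemma act_cont: "continuous_on UNIV (act r :: real^'d \<Rightarrow> real)"
  unfolding act_def by (intro continuous_intros)

lemma aug_cont: "continuous_on UNIV (\<lambda>x::real^'d. aug x a)"
  unfolding aug_def by (cases a) (auto intro!: continuous_intros)

lemma heaviside_ind: "heaviside t = indicator {0<..} t"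
  by (simp add: heaviside_def indicator_def)

lemma heav_meas: "(\<lambda>x::real^'d. heaviside (act r x)) \<in> borel_measurable lebesgue"
proof -
  have "heaviside \<in> borel_measurable borel"
    unfolding heaviside_ind[abs_def] by (rule borel_measurable_indicator) simp
  moreover have "act r \<in> borel_measurable lebesgue" by (rule cont_meas[OF act_cont])
  ultimately show ?thesis by (rule measurable_compose[rotated])
qed

definition Lf :: "('d option \<Rightarrow> real) \<Rightarrow> real^'d \<Rightarrow> real" where
  "Lf w x = (\<Sum>a\<in>UNIV. w a * aug x a)"

lemma Lf_expand: "Lf w x = w None + (\<Sum>k\<in>UNIV. w (Some k) * x $ k)"
proof -
  have "Lf w x = (\<Sum>a\<in>insert None (range Some). w a * aug x a)" unfolding Lf_def
    by (subst UNIV_option_conv) (rule refl)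
  also have "\<dots> = w None + (\<Sum>a\<in>range Some. w a * aug x a)"
    by (subst sum.insert) (auto simp: aug_def)
  also have "(\<Sum>a\<in>range Some. w a * aug x a) = (\<Sum>k\<in>UNIV. w (Some k) * x $ k)"
    by (subst sum.reindex) (auto simp: aug_def)
  finally show ?thesis .
qed

lemma Lf_cont: "continuous_on UNIV (Lf w)"
  unfolding Lf_def by (intro continuous_intros aug_cont)

lemma Lf_line: "Lf w (x + t *\<^sub>R y) = Lf w x + t * (\<Sum>k\<in>UNIV. w (Some k) * y $ k)"
  unfolding Lf_expand by (simp add: algebra_simps sum.distrib sum_distrib_left)

lemma Lf_zero_open:
  assumes "open U" "q \<in> U" "\<forall>x\<in>U. Lf w x = 0"
  shows "w a = 0"
proof -
  obtain e where e: "e > 0" "ball q e \<subseteq> U" using assms(1,2) open_contains_ball by blast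
  have sk: "w (Some k) = 0" for k
  proof -
    let ?y = "axis k (1::real)"
    have "q + (e/2) *\<^sub>R ?y \<in> ball q e" using e(1) by (simp add: dist_norm norm_axis_1)
    hence "Lf w (q + (e/2) *\<^sub>R ?y) = 0" using e assms(3) by blast
    moreover have "(\<Sum>j\<in>UNIV. w (Some j) * ?y $ j) = w (Some k)"
      by (simp add: axis_def if_distrib cong: if_cong)
    ultimately show ?thesis using Lf_line[of w q "e/2" ?y] assms(2,3) e(1) by simp
  qed
  have "w None = 0" using assms(2,3) unfolding Lf_expand by (simp add: sk) blast
  thus ?thesis using sk by (cases a) auto
qed

lemma act_line: "act r (p + t *\<^sub>R (y - p)) = act r p + t * (act r y - act r p)"
  unfolding act_def by (simp add: algebra_simps inner_diff_right)

lemma proportional: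
  fixes ri rk :: "real \<times> (real^'d)"
  assumes U: "open U" "p \<in> U" "act ri p = 0"
    and van: "\<forall>x\<in>U. act ri x = 0 \<longrightarrow> act rk x = 0"
    and nz: "snd rk \<noteq> 0"
  shows "\<exists>l. l \<noteq> 0 \<and> (\<forall>x. act rk x = l * act ri x)"
proof -
  define a where "a = snd ri"
  define b where "b = snd rk"
  obtain e where e: "e > 0" "ball p e \<subseteq> U" using U open_contains_ball by blast
  have pk: "act rk p = 0" using van U by blast
  have orth: "b \<bullet> u = 0" if "a \<bullet> u = 0" for u
  proof (cases "u = 0")
    case True thus ?thesis by simp
  next
    case False
    define t where "t = e / (2 * norm u)"
    have t: "t > 0" using e False by (simp add: t_def)
    have "norm (t *\<^sub>R u) = e/2" using False e by (simp add: t_def)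
    hence "p + t *\<^sub>R u \<in> ball p e" using e by (simp add: dist_norm)
    hence inU: "p + t *\<^sub>R u \<in> U" using e by blast
    have "act ri (p + t *\<^sub>R u) = act ri p + t * (a \<bullet> u)"
      by (simp add: act_def a_def algebra_simps inner_add_right)
    hence "act ri (p + t *\<^sub>R u) = 0" using that U by simp
    hence "act rk (p + t *\<^sub>R u) = 0" using van inU by blast
    moreover have "act rk (p + t *\<^sub>R u) = act rk p + t * (b \<bullet> u)"
      by (simp add: act_def b_def algebra_simps inner_add_right)
    ultimately show ?thesis using pk t by simp
  qed
  have a0: "a \<noteq> 0"
  proof
    assume "a = 0"
    hence "\<forall>u. b \<bullet> u = 0" using orth by simp
    hence "b \<bullet> b = 0" by blast
    thus False using nz b_def by simp
  qed
  define l where "l = (b \<bullet> a) / (a \<bullet> a)"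
  define u where "u = b - l *\<^sub>R a"
  have aa: "a \<bullet> a \<noteq> 0" using a0 by simp
  have au: "a \<bullet> u = 0" using aa by (simp add: u_def l_def inner_diff_right inner_commute)
  hence bu: "b \<bullet> u = 0" by (rule orth)
  have "u \<bullet> u = b \<bullet> u - l * (a \<bullet> u)" by (simp add: u_def inner_diff_left)
  hence "u = 0" using au bu by simp
  hence bl: "b = l *\<^sub>R a" by (simp add: u_def)
  have l0: "l \<noteq> 0" using bl nz b_def by auto
  have "fst rk = l * fst ri"
  proof -
    have "fst rk = - (b \<bullet> p)" using pk by (simp add: act_def b_def)
    also have "\<dots> = l * (- (a \<bullet> p))" using bl by simp
    also have "- (a \<bullet> p) = fst ri" using U(3) by (simp add: act_def a_def)
    finally show ?thesis .
  qed
  hence "\<forall>x. act rk x = l * act ri x" using bl by (simp add: act_def a_def b_def algebra_simps)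
  thus ?thesis using l0 by blast
qed

lemma hyperplane_act: "hyperplane \<Omega> r = {x \<in> \<Omega>. act r x = 0}"
  unfolding hyperplane_def act_def by (simp add: add.commute)

lemma find_point:
  fixes r :: "nat \<Rightarrow> real \<times> (real^'d)"
  assumes "open \<Omega>" "p0 \<in> \<Omega>" "act (r i) p0 = 0" "finite S"
    and H: "\<forall>j\<in>S. \<forall>U. open U \<longrightarrow> U \<subseteq> \<Omega> \<longrightarrow> (\<exists>x\<in>U. act (r i) x = 0)
              \<longrightarrow> (\<exists>x\<in>U. act (r i) x = 0 \<and> act (r j) x \<noteq> 0)"
  shows "\<exists>p\<in>\<Omega>. act (r i) p = 0 \<and> (\<forall>j\<in>S. act (r j) p \<noteq> 0)"
  using assms(4,5)
proof (induction S rule: finite_induct)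
  case empty thus ?case using assms by blast
next
  case (insert k S)
  then obtain p where p: "p \<in> \<Omega>" "act (r i) p = 0" "\<forall>j\<in>S. act (r j) p \<noteq> 0" by blast
  show ?case
  proof (cases "act (r k) p = 0")
    case False thus ?thesis using p by blast
  next
    case True
    obtain e where e: "e > 0" "ball p e \<subseteq> \<Omega>" using assms(1) p(1) open_contains_ball by blast
    obtain y where y: "y \<in> ball p e" "act (r i) y = 0" "act (r k) y \<noteq> 0"
    proof -
      have "\<exists>x\<in>ball p e. act (r i) x = 0" using e p by (intro bexI[of _ p]) auto
      thus ?thesis using insert.prems[rule_format, of k "ball p e"] e that by auto
    qed
    define z where "z t = p + t *\<^sub>R (y - p)" for t :: real
    have ev1: "\<forall>\<^sub>F t in at_right 0. \<forall>j\<in>S. act (r j) (z t) \<noteq> 0"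
    proof (rule eventually_ball_finite[OF insert.hyps(1)], rule ballI)
      fix j assume "j \<in> S"
      have "((\<lambda>t. act (r j) p + t * (act (r j) y - act (r j) p)) \<longlongrightarrow>
              act (r j) p + 0 * (act (r j) y - act (r j) p)) (at_right 0)"
        by (intro tendsto_intros)
      hence "\<forall>\<^sub>F t in at_right 0. act (r j) p + t * (act (r j) y - act (r j) p) \<noteq> 0"
        using p(3) \<open>j \<in> S\<close> by (intro tendsto_imp_eventually_ne) auto
      thus "\<forall>\<^sub>F t in at_right 0. act (r j) (z t) \<noteq> 0" by (simp add: z_def act_line)
    qed
    have ev2: "\<forall>\<^sub>F t in at_right (0::real). t \<in> {0<..<1}" by (rule eventually_at_right_real) simp
    obtain t where t: "t \<in> {0<..<1}" "\<forall>j\<in>S. act (r j) (z t) \<noteq> 0"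
      using eventually_happens[OF eventually_conj[OF ev1 ev2]] trivial_limit_at_right_real by blast
    have "dist p (z t) = t * dist p y" using t(1)
      by (simp add: z_def dist_norm norm_minus_commute)
    also have "\<dots> \<le> 1 * dist p y" using t(1) by (intro mult_right_mono) auto
    also have "\<dots> < e" using y(1) by simp
    finally have "z t \<in> \<Omega>" using e by auto
    moreover have "act (r i) (z t) = 0" using p(2) y(2) by (simp add: z_def act_line)
    moreover have "act (r k) (z t) \<noteq> 0" using True y(3) t(1) by (simp add: z_def act_line)
    ultimately show ?thesis using t(2) by blast
  qed
qed


lemma Lf_sum: "Lf (\<lambda>a. \<Sum>j\<in>S. c j * w j a) x = (\<Sum>j\<in>S. c j * Lf (w j) x)"
  unfolding Lf_def by (simp add: sum_distrib_left sum_distrib_right sum.swap[of _ S] mult.assoc)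

lemma ae_open_zero:
  fixes F :: "real^'d \<Rightarrow> real"
  assumes "continuous_on UNIV F" "open U" "AE x in lebesgue. x \<in> U \<longrightarrow> F x = 0" "x \<in> U"
  shows "F x = 0"
proof -
  have "closed {x. F x = 0}" using assms(1) by (intro closed_Collect_eq continuous_intros) auto
  moreover have "AE x\<in>U in lebesgue. x \<in> {x. F x = 0}" using assms(3) by simp
  ultimately have "x \<in> {x. F x = 0}" using mem_closed_if_AE_lebesgue_open assms(2,4) by blast
  thus ?thesis by simp
qed

lemma jump:
  fixes r :: "nat \<Rightarrow> real \<times> (real^'d)" and v :: "nat \<times> 'd option \<Rightarrow> real"
  assumes opn: "open \<Omega>" and ups: "r \<in> Upsilon \<Omega> n"
    and dist: "\<forall>i<n. \<forall>j<n. i \<noteq> j \<longrightarrow> hyperplane \<Omega> (r i) \<noteq> hyperplane \<Omega> (r j)"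
    and ae: "AE x in lebesgue. x \<in> \<Omega> \<longrightarrow> (\<Sum>j<n. heaviside (act (r j) x) * Lf (\<lambda>a. v (j,a)) x) = 0"
    and i: "i < n"
  shows "v (i,a) = 0"
proof -
  define S where "S = {j. j < n \<and> j \<noteq> i}"
  have finS: "finite S" by (simp add: S_def)
  have nz: "snd (r j) \<noteq> 0" if "j < n" for j
    proof -
    have "norm (snd (r j)) = 1" using ups that unfolding Upsilon_def by auto
    thus ?thesis by auto
  qed
  have normi: "norm (snd (r i)) = 1" using ups i unfolding Upsilon_def by auto
  obtain p0 where p0: "p0 \<in> \<Omega>" "act (r i) p0 = 0"
    using ups i unfolding Upsilon_def hyperplane_act by auto
  have H: "\<forall>j\<in>S. \<forall>U. open U \<longrightarrow> U \<subseteq> \<Omega> \<longrightarrow> (\<exists>x\<in>U. act (r i) x = 0)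
              \<longrightarrow> (\<exists>x\<in>U. act (r i) x = 0 \<and> act (r j) x \<noteq> 0)"
  proof (intro ballI allI impI, rule ccontr)
    fix j U assume j: "j \<in> S" and U: "open U" "U \<subseteq> \<Omega>" and ex: "\<exists>x\<in>U. act (r i) x = 0"
      and no: "\<not> (\<exists>x\<in>U. act (r i) x = 0 \<and> act (r j) x \<noteq> 0)"
    obtain q where q: "q \<in> U" "act (r i) q = 0" using ex by blast
    have "\<exists>l. l \<noteq> 0 \<and> (\<forall>x. act (r j) x = l * act (r i) x)"
      by (rule proportional[OF U(1) q]) (use no nz j S_def in auto)
    then obtain l where l: "l \<noteq> 0" "\<And>x. act (r j) x = l * act (r i) x" by blast
    have "hyperplane \<Omega> (r j) = hyperplane \<Omega> (r i)" unfolding hyperplane_act using l by auto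
    thus False using dist j i unfolding S_def by auto
  qed
  obtain p where p: "p \<in> \<Omega>" "act (r i) p = 0" "\<forall>j\<in>S. act (r j) p \<noteq> 0"
    using find_point[OF opn p0 finS H] by blast
  define V where "V j = (if act (r j) p > 0 then {x. 0 < act (r j) x} else {x. act (r j) x < 0})" for j
  define U0 where "U0 = \<Omega> \<inter> (\<Inter>j\<in>S. V j)"
  have "open (V j)" for j unfolding V_def
    by (auto intro!: open_Collect_less act_cont continuous_intros)
  hence oU0: "open U0" unfolding U0_def using opn finS by (intro open_Int open_INT) auto
  have pU0: "p \<in> U0" unfolding U0_def V_def using p by auto
  have hs: "heaviside (act (r j) x) = heaviside (act (r j) p)" if "x \<in> U0" "j \<in> S" for x j
  proof -
    have "x \<in> V j" using that unfolding U0_def by auto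
    thus ?thesis by (cases "act (r j) p > 0") (auto simp: V_def heaviside_def)
  qed
  define C where "C a = (\<Sum>j\<in>S. heaviside (act (r j) p) * v (j,a))" for a
  have splt: "(\<Sum>j<n. heaviside (act (r j) x) * Lf (\<lambda>a. v (j,a)) x)
      = Lf C x + heaviside (act (r i) x) * Lf (\<lambda>a. v (i,a)) x" if "x \<in> U0" for x
  proof -
    have "{..<n} = insert i S" using i by (auto simp: S_def)
    hence "(\<Sum>j<n. heaviside (act (r j) x) * Lf (\<lambda>a. v (j,a)) x)
       = heaviside (act (r i) x) * Lf (\<lambda>a. v (i,a)) x + (\<Sum>j\<in>S. heaviside (act (r j) x) * Lf (\<lambda>a. v (j,a)) x)"
      using finS by (simp add: S_def)
    also have "(\<Sum>j\<in>S. heaviside (act (r j) x) * Lf (\<lambda>a. v (j,a)) x)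
        = (\<Sum>j\<in>S. heaviside (act (r j) p) * Lf (\<lambda>a. v (j,a)) x)"
      using hs that by (intro sum.cong) auto
    also have "\<dots> = Lf C x" unfolding C_def by (rule Lf_sum[symmetric])
    finally show ?thesis by simp
  qed
  obtain e where e: "e > 0" "ball p e \<subseteq> U0" using oU0 pU0 open_contains_ball by blast
  define a0 where "a0 = snd (r i)"
  have aa: "a0 \<bullet> a0 = 1" using normi by (simp add: a0_def norm_eq_sqrt_inner)
  have actpm: "act (r i) (p + t *\<^sub>R a0) = t" for t
    using p(2) aa by (simp add: act_def a0_def algebra_simps inner_add_right)
  have inball: "p + t *\<^sub>R a0 \<in> U0" if "\<bar>t\<bar> < e" for t
  proof -
    have "p + t *\<^sub>R a0 \<in> ball p e" using that normi by (simp add: dist_norm a0_def)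
    thus ?thesis using e by blast
  qed
  define Um where "Um = U0 \<inter> {x. act (r i) x < 0}"
  define Up where "Up = U0 \<inter> {x. 0 < act (r i) x}"
  have oUm: "open Um" unfolding Um_def using oU0
    by (intro open_Int open_Collect_less act_cont continuous_intros)
  have oUp: "open Up" unfolding Up_def using oU0
    by (intro open_Int open_Collect_less act_cont continuous_intros)
  have mUm: "p + (-e/2) *\<^sub>R a0 \<in> Um" unfolding Um_def using e actpm[of "-e/2"] inball[of "-e/2"] by (simp del: scaleR_minus_left)
  have mUp: "p + (e/2) *\<^sub>R a0 \<in> Up" unfolding Up_def using e actpm inball[of "e/2"] by auto
  have "AE x in lebesgue. x \<in> Um \<longrightarrow> Lf C x = 0"
    using ae
  proof eventually_elim
    case (elim x)
    show ?case
    proof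
      assume "x \<in> Um"
      hence "x \<in> U0" "heaviside (act (r i) x) = 0" by (auto simp: Um_def heaviside_def)
      thus "Lf C x = 0" using elim splt[of x] by (simp add: U0_def)
    qed
  qed
  hence "\<forall>x\<in>Um. Lf C x = 0" using ae_open_zero[OF Lf_cont oUm] by blast
  hence C0: "C b = 0" for b using Lf_zero_open[OF oUm mUm] by blast
  have LC0: "Lf C x = 0" for x unfolding Lf_def using C0 by simp
  have "AE x in lebesgue. x \<in> Up \<longrightarrow> Lf (\<lambda>a. v (i,a)) x = 0"
    using ae
  proof eventually_elim
    case (elim x)
    show ?case
    proof
      assume "x \<in> Up"
      hence "x \<in> U0" "heaviside (act (r i) x) = 1" by (auto simp: Up_def heaviside_def)
      thus "Lf (\<lambda>a. v (i,a)) x = 0" using elim splt[of x] by (simp add: U0_def LC0)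
    qed
  qed
  hence "\<forall>x\<in>Up. Lf (\<lambda>a. v (i,a)) x = 0" using ae_open_zero[OF Lf_cont oUp] by blast
  thus ?thesis using Lf_zero_open[OF oUp mUp] by blast
qed



lemma SI:
  fixes \<mu> g :: "real^'d \<Rightarrow> real"
  assumes \<Omega>m: "\<Omega> \<in> lmeasurable" and m\<mu>: "set_borel_measurable lebesgue \<Omega> \<mu>"
    and B\<mu>: "\<forall>x\<in>\<Omega>. \<bar>\<mu> x\<bar> \<le> B" and g: "g \<in> borel_measurable lebesgue"
    and Kg: "\<forall>x\<in>\<Omega>. \<bar>g x\<bar> \<le> K"
  shows "set_integrable lebesgue \<Omega> (\<lambda>x. \<mu> x * g x)"
proof (rule set_integrable_bound[where f="\<lambda>_. B * K"])
  have "integrable lebesgue (indicat_real \<Omega>)" using \<Omega>m lmeasurable_iff_integrable by blast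
  hence "integrable lebesgue (\<lambda>x. indicat_real \<Omega> x * (B * K))" by (rule integrable_mult_left)
  thus "set_integrable lebesgue \<Omega> (\<lambda>_. B * K)" unfolding set_integrable_def by simp
next
  have "(\<lambda>x. indicator \<Omega> x *\<^sub>R \<mu> x) \<in> borel_measurable lebesgue"
    using m\<mu> unfolding set_borel_measurable_def .
  hence "(\<lambda>x. (indicator \<Omega> x *\<^sub>R \<mu> x) * g x) \<in> borel_measurable lebesgue"
    using g by (intro borel_measurable_times)
  thus "set_borel_measurable lebesgue \<Omega> (\<lambda>x. \<mu> x * g x)"
    unfolding set_borel_measurable_def by (simp add: mult.assoc)
next
  show "AE x\<in>\<Omega> in lebesgue. norm (\<mu> x * g x) \<le> norm (B * K)"
  proof (rule AE_I2, rule impI)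
    fix x assume x: "x \<in> \<Omega>"
    have "\<bar>\<mu> x\<bar> * \<bar>g x\<bar> \<le> B * K" using B\<mu> Kg x by (intro mult_mono) auto
    moreover have "B \<ge> 0" "K \<ge> 0" using B\<mu> Kg x by (meson abs_ge_zero order_trans)+
    ultimately show "norm (\<mu> x * g x) \<le> norm (B * K)" by (simp add: abs_mult)
  qed
qed

definition psi :: "(nat \<Rightarrow> real \<times> (real^'d)) \<Rightarrow> nat \<times> 'd option \<Rightarrow> real^'d \<Rightarrow> real" where
  "psi r k x = heaviside (act (r (fst k)) x) * aug x (snd k)"

lemma psi_meas: "psi r k \<in> borel_measurable lebesgue"
  unfolding psi_def[abs_def] by (intro borel_measurable_times heav_meas cont_meas aug_cont)

lemma psi_bound: "\<bar>aug x (snd k)\<bar> \<le> M \<Longrightarrow> \<bar>psi r k x\<bar> \<le> M"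
  unfolding psi_def heaviside_def by auto

lemma layer_psi: "layer_GN \<Omega> \<mu> n r k l = (LINT x:\<Omega>|lebesgue. \<mu> x * (psi r k x * psi r l x))"
  unfolding layer_GN_def kron_def psi_def by (simp add: mult_ac)

lemma QF:
  fixes \<mu> :: "real^'d \<Rightarrow> real"
  assumes \<Omega>m: "\<Omega> \<in> lmeasurable" and m\<mu>: "set_borel_measurable lebesgue \<Omega> \<mu>"
    and B\<mu>: "\<forall>x\<in>\<Omega>. \<bar>\<mu> x\<bar> \<le> B" and M: "\<forall>x\<in>\<Omega>. \<forall>a. \<bar>aug x a\<bar> \<le> M"
    and fin: "finite I"
  shows "(\<Sum>k\<in>I. \<Sum>l\<in>I. v k * layer_GN \<Omega> \<mu> n r k l * v l)
       = (LINT x:\<Omega>|lebesgue. \<mu> x * (\<Sum>k\<in>I. v k * psi r k x)^2)"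
    and "set_integrable lebesgue \<Omega> (\<lambda>x. \<mu> x * (\<Sum>k\<in>I. v k * psi r k x)^2)"
proof -
  define G where "G k l x = \<mu> x * (v k * psi r k x * (v l * psi r l x))" for k l x
  have pb: "\<bar>psi r k x\<bar> \<le> M" if "x \<in> \<Omega>" for k x using M that psi_bound by blast
  have intG: "set_integrable lebesgue \<Omega> (G k l)" for k l
    unfolding G_def
  proof (rule SI[OF \<Omega>m m\<mu> B\<mu>])
    show "(\<lambda>x. v k * psi r k x * (v l * psi r l x)) \<in> borel_measurable lebesgue"
      by (intro borel_measurable_times borel_measurable_const psi_meas)
    show "\<forall>x\<in>\<Omega>. \<bar>v k * psi r k x * (v l * psi r l x)\<bar> \<le> \<bar>v k\<bar> * M * (\<bar>v l\<bar> * M)"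
    proof
      fix x assume x: "x \<in> \<Omega>"
      have k: "\<bar>psi r k x\<bar> \<le> M" and l: "\<bar>psi r l x\<bar> \<le> M" using pb[OF x] by blast+
      have M0: "M \<ge> 0" using k by linarith
      have "\<bar>v k\<bar> * \<bar>psi r k x\<bar> \<le> \<bar>v k\<bar> * M" using k by (intro mult_left_mono) auto
      moreover have "\<bar>v l\<bar> * \<bar>psi r l x\<bar> \<le> \<bar>v l\<bar> * M" using l by (intro mult_left_mono) auto
      ultimately have "\<bar>v k\<bar> * \<bar>psi r k x\<bar> * (\<bar>v l\<bar> * \<bar>psi r l x\<bar>) \<le> \<bar>v k\<bar> * M * (\<bar>v l\<bar> * M)"
        apply (rule mult_mono) using M0 by auto
      thus "\<bar>v k * psi r k x * (v l * psi r l x)\<bar> \<le> \<bar>v k\<bar> * M * (\<bar>v l\<bar> * M)"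
        by (simp add: abs_mult)
    qed
  qed
  have "(\<Sum>k\<in>I. \<Sum>l\<in>I. v k * layer_GN \<Omega> \<mu> n r k l * v l)
      = (\<Sum>k\<in>I. \<Sum>l\<in>I. (LINT x:\<Omega>|lebesgue. G k l x))"
  proof (intro sum.cong refl)
    fix k l
    have "v k * layer_GN \<Omega> \<mu> n r k l * v l
        = v k * (LINT x:\<Omega>|lebesgue. \<mu> x * (psi r k x * psi r l x)) * v l" by (simp add: layer_psi)
    also have "\<dots> = (LINT x:\<Omega>|lebesgue. v k * (\<mu> x * (psi r k x * psi r l x)) * v l)"
      by (simp add: set_integral_mult_right set_integral_mult_left)
    also have "\<dots> = (LINT x:\<Omega>|lebesgue. G k l x)" unfolding G_def by (simp add: mult_ac)
    finally show "v k * layer_GN \<Omega> \<mu> n r k l * v l = (LINT x:\<Omega>|lebesgue. G k l x)" .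
  qed
  also have "\<dots> = (\<Sum>k\<in>I. (LINT x:\<Omega>|lebesgue. (\<Sum>l\<in>I. G k l x)))"
    using intG unfolding set_lebesgue_integral_def set_integrable_def
    by (simp add: integral_sum sum_distrib_left)
  also have "\<dots> = (LINT x:\<Omega>|lebesgue. (\<Sum>k\<in>I. \<Sum>l\<in>I. G k l x))"
    using intG unfolding set_lebesgue_integral_def set_integrable_def
    by (simp add: integral_sum sum_distrib_left integrable_sum)
  also have "\<dots> = (LINT x:\<Omega>|lebesgue. \<mu> x * (\<Sum>k\<in>I. v k * psi r k x)^2)"
  proof -
    have pw: "(\<Sum>k\<in>I. \<Sum>l\<in>I. G k l x) = \<mu> x * (\<Sum>k\<in>I. v k * psi r k x)^2" for x
    proof -
      have "(\<Sum>k\<in>I. v k * psi r k x)^2 = (\<Sum>k\<in>I. \<Sum>l\<in>I. (v k * psi r k x) * (v l * psi r l x))"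
        by (simp only: power2_eq_square sum_product)
      thus ?thesis by (simp add: G_def sum_distrib_left)
    qed
    show ?thesis by (simp only: pw)
  qed
  finally show "(\<Sum>k\<in>I. \<Sum>l\<in>I. v k * layer_GN \<Omega> \<mu> n r k l * v l)
       = (LINT x:\<Omega>|lebesgue. \<mu> x * (\<Sum>k\<in>I. v k * psi r k x)^2)" .
  show "set_integrable lebesgue \<Omega> (\<lambda>x. \<mu> x * (\<Sum>k\<in>I. v k * psi r k x)^2)"
  proof (rule SI[OF \<Omega>m m\<mu> B\<mu>])
    show "(\<lambda>x. (\<Sum>k\<in>I. v k * psi r k x)^2) \<in> borel_measurable lebesgue"
      by (intro borel_measurable_power borel_measurable_sum borel_measurable_times
            borel_measurable_const psi_meas)
    show "\<forall>x\<in>\<Omega>. \<bar>(\<Sum>k\<in>I. v k * psi r k x)^2\<bar> \<le> (\<Sum>k\<in>I. \<bar>v k\<bar> * M)^2"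
    proof
      fix x assume x: "x \<in> \<Omega>"
      have "\<bar>\<Sum>k\<in>I. v k * psi r k x\<bar> \<le> (\<Sum>k\<in>I. \<bar>v k * psi r k x\<bar>)" by (rule sum_abs)
      also have "\<dots> \<le> (\<Sum>k\<in>I. \<bar>v k\<bar> * M)"
        using pb[OF x] by (intro sum_mono) (simp add: abs_mult mult_left_mono)
      finally have "\<bar>\<Sum>k\<in>I. v k * psi r k x\<bar>^2 \<le> (\<Sum>k\<in>I. \<bar>v k\<bar> * M)^2"
        by (intro power_mono) auto
      thus "\<bar>(\<Sum>k\<in>I. v k * psi r k x)^2\<bar> \<le> (\<Sum>k\<in>I. \<bar>v k\<bar> * M)^2" by (simp add: power_abs)
    qed
  qed
qed



lemma fin_idx: "finite (idx n :: (nat \<times> 'd::finite option) set)"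
  unfolding idx_def by simp

lemma D_eq: "kron (diag_mat c) id_mat k m = (if k = m then c (fst k) else 0)"
  by (cases k; cases m) (auto simp: kron_def diag_mat_def id_mat_def)

lemma sum_if_l: "finite I \<Longrightarrow> k \<in> I \<Longrightarrow> (\<Sum>m\<in>I. (if k = m then a m else 0) * b m) = a k * (b k::real)"
proof -
  assume "finite I" "k \<in> I"
  have "(\<Sum>m\<in>I. (if k = m then a m else 0) * b m) = (\<Sum>m\<in>I. if k = m then a m * b m else 0)"
    by (rule sum.cong) auto
  thus ?thesis using \<open>finite I\<close> \<open>k \<in> I\<close> by simp
qed

lemma sum_if_r: "finite I \<Longrightarrow> l \<in> I \<Longrightarrow> (\<Sum>m\<in>I. b m * (if m = l then a m else 0)) = b l * (a l::real)"
proof -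
  assume "finite I" "l \<in> I"
  have "(\<Sum>m\<in>I. b m * (if m = l then a m else 0)) = (\<Sum>m\<in>I. if m = l then b m * a m else 0)"
    by (rule sum.cong) auto
  thus ?thesis using \<open>finite I\<close> \<open>l \<in> I\<close> by simp
qed

lemma GN_entry:
  fixes k l :: "nat \<times> 'd::finite option"
  assumes "k \<in> idx n" "l \<in> idx n"
  shows "GN \<Omega> \<mu> n c r k l = c (fst k) * layer_GN \<Omega> \<mu> n r k l * c (fst l)"
proof -
  have 1: "mat_mult (idx n) (kron (diag_mat c) id_mat) (layer_GN \<Omega> \<mu> n r) k m
      = c (fst k) * layer_GN \<Omega> \<mu> n r k m" for m
    unfolding mat_mult_def D_eq
    using sum_if_l[OF fin_idx assms(1), where a="\<lambda>_. c (fst k)"] by simp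
  show ?thesis unfolding GN_def mat_mult_def[of _ _ "kron (diag_mat c) id_mat"] 1 D_eq
    using assms(2) fin_idx by (subst sum_if_r[where a="\<lambda>m. c (fst m)"]) auto
qed

lemma Fv_eq: "(\<Sum>k\<in>idx n. v k * psi r k x)
   = (\<Sum>j<n. heaviside (act (r j) x) * Lf (\<lambda>a. v (j,a)) x)"
  unfolding idx_def sum.cartesian_product' psi_def Lf_def
  by (simp add: sum_distrib_left mult_ac)



theorem theorem4p3:
  fixes \<Omega> :: "(real^'d) set" and \<mu> :: "real^'d \<Rightarrow> real"
    and n :: nat and r :: "nat \<Rightarrow> real \<times> (real^'d)"
  assumes "open \<Omega>" and "connected \<Omega>" and "bounded \<Omega>"
    and "set_borel_measurable lebesgue \<Omega> \<mu>"
    and "\<exists>B. \<forall>x\<in>\<Omega>. \<bar>\<mu> x\<bar> \<le> B"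
    and "AE x in lebesgue. x \<in> \<Omega> \<longrightarrow> \<mu> x > 0"
    and "r \<in> Upsilon \<Omega> n"
    and "\<forall>i<n. \<forall>j<n. i \<noteq> j \<longrightarrow> hyperplane \<Omega> (r i) \<noteq> hyperplane \<Omega> (r j)"
  shows "symmetric_on (idx n) (layer_GN \<Omega> \<mu> n r)
       \<and> pos_def_on (idx n) (layer_GN \<Omega> \<mu> n r)
       \<and> (\<forall>c :: nat \<Rightarrow> real. pos_def_on (idx n) (GN \<Omega> \<mu> n c r) \<longleftrightarrow> (\<forall>i<n. c i \<noteq> 0))"
proof -
  have \<Omega>m: "\<Omega> \<in> lmeasurable" using assms(1,3) by (rule lmeasurable_open[rotated])
  obtain B where B: "\<forall>x\<in>\<Omega>. \<bar>\<mu> x\<bar> \<le> B" using assms(5) by blast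
  obtain R where R: "\<forall>x\<in>\<Omega>. norm x \<le> R" using assms(3) bounded_iff by blast
  have M: "\<forall>x\<in>\<Omega>. \<forall>a. \<bar>aug x a\<bar> \<le> 1 + \<bar>R\<bar>"
  proof (intro ballI allI)
    fix x a assume x: "x \<in> \<Omega>"
    show "\<bar>aug x a\<bar> \<le> 1 + \<bar>R\<bar>"
    proof (cases a)
      case None thus ?thesis by (simp add: aug_def)
    next
      case (Some j)
      have "\<bar>x $ j\<bar> \<le> norm x" by (rule component_le_norm_cart)
      moreover have "norm x \<le> R" using R x by blast
      ultimately show ?thesis using Some by (simp add: aug_def)
    qed
  qed
  define Q where "Q v = (\<Sum>k\<in>idx n. \<Sum>l\<in>idx n. v k * layer_GN \<Omega> \<mu> n r k l * v l)" for v
  have pos: "Q v > 0" if ex: "\<exists>k\<in>idx n. v k \<noteq> 0" for v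
  proof -
    define F where "F x = (\<Sum>k\<in>idx n. v k * psi r k x)" for x
    have eq: "Q v = (LINT x:\<Omega>|lebesgue. \<mu> x * (F x)^2)"
      unfolding Q_def F_def by (rule QF(1)[OF \<Omega>m assms(4) B M fin_idx])
    have si: "set_integrable lebesgue \<Omega> (\<lambda>x. \<mu> x * (F x)^2)"
      unfolding F_def by (rule QF(2)[OF \<Omega>m assms(4) B M fin_idx])
    define f where "f x = indicator \<Omega> x * (\<mu> x * (F x)^2)" for x
    have intf: "integrable lebesgue f" using si unfolding set_integrable_def f_def by simp
    have nn: "AE x in lebesgue. 0 \<le> f x"
      using assms(6) by eventually_elim (auto simp: f_def indicator_def)
    have Qf: "Q v = integral\<^sup>L lebesgue f"
      unfolding eq set_lebesgue_integral_def f_def by simp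
    have ge: "Q v \<ge> 0" unfolding Qf by (rule integral_nonneg_AE[OF nn])
    have ne: "Q v \<noteq> 0"
    proof
      assume "Q v = 0"
      hence "AE x in lebesgue. f x = 0" using integral_nonneg_eq_0_iff_AE[OF intf nn] Qf by simp
      hence ae: "AE x in lebesgue. x \<in> \<Omega> \<longrightarrow>
          (\<Sum>j<n. heaviside (act (r j) x) * Lf (\<lambda>a. v (j,a)) x) = 0"
        using assms(6)
      proof eventually_elim
        case (elim x)
        show ?case
        proof
          assume x: "x \<in> \<Omega>"
          hence "\<mu> x * (F x)^2 = 0" "\<mu> x > 0" using elim by (auto simp: f_def)
          hence "F x = 0" by simp
          thus "(\<Sum>j<n. heaviside (act (r j) x) * Lf (\<lambda>a. v (j,a)) x) = 0"
            unfolding F_def Fv_eq .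
        qed
      qed
      obtain k where k: "k \<in> idx n" "v k \<noteq> 0" using ex by blast
      obtain i a where ia: "k = (i,a)" by (cases k)
      have "i < n" using k ia by (simp add: idx_def)
      hence "v (i,a) = 0" by (rule jump[OF assms(1,7,8) ae])
      thus False using k ia by simp
    qed
    show ?thesis using ge ne by simp
  qed
  have sym: "symmetric_on (idx n) (layer_GN \<Omega> \<mu> n r)"
    unfolding symmetric_on_def layer_GN_def kron_def by (simp add: mult_ac)
  have pd: "pos_def_on (idx n) (layer_GN \<Omega> \<mu> n r)"
    unfolding pos_def_on_def using pos unfolding Q_def by blast
  have GNQ: "(\<Sum>k\<in>idx n. \<Sum>l\<in>idx n. v k * GN \<Omega> \<mu> n c r k l * v l) = Q (\<lambda>k. c (fst k) * v k)"
    for c v unfolding Q_def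
  proof (rule sum.cong[OF refl], rule sum.cong[OF refl])
    fix k l :: "nat \<times> 'd option" assume kl: "k \<in> idx n" "l \<in> idx n"
    have "v k * GN \<Omega> \<mu> n c r k l * v l = v k * (c (fst k) * layer_GN \<Omega> \<mu> n r k l * c (fst l)) * v l"
      using GN_entry[OF kl] by simp
    also have "\<dots> = c (fst k) * v k * layer_GN \<Omega> \<mu> n r k l * (c (fst l) * v l)" by (simp only: mult_ac)
    finally show "v k * GN \<Omega> \<mu> n c r k l * v l = c (fst k) * v k * layer_GN \<Omega> \<mu> n r k l * (c (fst l) * v l)" .
  qed
  have "pos_def_on (idx n) (GN \<Omega> \<mu> n c r) \<longleftrightarrow> (\<forall>i<n. c i \<noteq> 0)" for c
  proof
    assume pdG: "pos_def_on (idx n) (GN \<Omega> \<mu> n c r)"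
    show "\<forall>i<n. c i \<noteq> 0"
    proof (rule allI, rule impI, rule ccontr)
      fix i assume i: "i < n" and "\<not> c i \<noteq> 0"
      hence ci: "c i = 0" by simp
      define v where "v k = (if k = (i, None) then 1 else 0 :: real)" for k :: "nat \<times> 'd option"
      have mem: "(i, None) \<in> idx n" using i by (simp add: idx_def)
      have "\<exists>k\<in>(idx n :: (nat \<times> 'd option) set). v k \<noteq> 0" using mem by (intro bexI[of _ "(i,None)"]) (simp_all add: v_def)
      hence "(\<Sum>k\<in>idx n. \<Sum>l\<in>idx n. v k * GN \<Omega> \<mu> n c r k l * v l) > 0"
        using pdG unfolding pos_def_on_def by blast
      moreover have w0: "c (fst k) * v k = 0" for k using ci by (auto simp: v_def)
      hence "Q (\<lambda>k. c (fst k) * v k) = 0" unfolding Q_def by (simp only: w0) simp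
      ultimately show False using GNQ by simp
    qed
  next
    assume c: "\<forall>i<n. c i \<noteq> 0"
    show "pos_def_on (idx n) (GN \<Omega> \<mu> n c r)" unfolding pos_def_on_def
    proof (intro allI impI)
      fix v :: "nat \<times> 'd option \<Rightarrow> real" assume "\<exists>k\<in>idx n. v k \<noteq> 0"
      then obtain k where k: "k \<in> idx n" "v k \<noteq> 0" by blast
      have "fst k < n" using k by (auto simp: idx_def)
      hence "c (fst k) * v k \<noteq> 0" using c k by simp
      hence "Q (\<lambda>k. c (fst k) * v k) > 0" using k by (intro pos) blast
      thus "(\<Sum>k\<in>idx n. \<Sum>l\<in>idx n. v k * GN \<Omega> \<mu> n c r k l * v l) > 0" using GNQ by simp
    qed
  qed
  thus ?thesis using sym pd by blast
qed


end
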